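(* Let $A$ be a general metric space and $\mathrm{WFil}^*(A)$ the preorder of weakly flat filters on $A$ under the relation $\to$. Then: (a) every nonempty family of objects of $\mathrm{WFil}^*(A)$ has a least upper bound (colimit) in $\mathrm{WFil}^*(A)$; (b) the filters of forward Cauchy sequences are dense: every weakly flat filter $\mathcal F$ is a least upper bound in $\mathrm{WFil}^*(A)$ of the family of (filters of) forward Cauchy sequences $(x_n)$ with $(x_n)\to\mathcal F$; (c) the flat filters are exactly (up to isomorphism in $\mathrm{WFil}^*(A)$) the least upper bounds in $\mathrm{WFil}^*(A)$ of nonempty families $\mathcal S$ of (filters of) forward Cauchy sequences that are directed, i.e. for all $s,t\in\mathcal S$ there is $u\in\mathcal S$ with $s\to u$ and $t\to u$ (equivalently, colimits of functors with nonempty filtered domain taking values forward Cauchy sequences).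
   Context: A general metric space $A$ is a set with $A(-,-):A\times A\to[0,\infty]$, $A(x,x)=0$, $A(x,z)\le A(x,y)+A(y,z)$ (no symmetry). A filter on $A$ is a nonempty set of nonempty subsets closed under finite intersections and supersets. $\mathcal F$ is weakly flat iff for every $\epsilon>0$ there is $f\in\mathcal F$ such that for all $x\in f$ and all $g\in\mathcal F$ there is $y\in g$ with $A(x,y)\le\epsilon$; $\mathcal F$ is flat iff for every $\epsilon>0$ there is $f\in\mathcal F$ such that for every finite family $x_1,\dots,x_n\in f$ and every $g\in\mathcal F$ there is $y\in g$ with $A(x_i,y)\le\epsilon$ for all $i$. For weakly flat filters, $\mathcal F_1\to\mathcal F_2$ iff for every $\epsilon>0$ there is $f\in\mathcal F_1$ such that for every $x\in f$ and every $g\in\mathcal F_2$ there is $y\in g$ with $A(x,y)\le\epsilon$; this is a preorder. The filter of a sequence $(x_n)$ is generated by the tails $\{x_p:p\ge n\}$; $(x_n)$ is forward Cauchy iff for every $\epsilon>0$ there is $N$ with $A(x_n,x_m)\le\epsilon$ whenever $m\ge n\ge N$ (such filters are flat). *)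

theory Defs
  imports Complex_Main "HOL-Library.Extended_Nonnegative_Real"
begin

definition gms :: "('a \<Rightarrow> 'a \<Rightarrow> ennreal) \<Rightarrow> bool" where
  "gms d \<longleftrightarrow> (\<forall>x. d x x = 0) \<and> (\<forall>x y z. d x z \<le> d x y + d y z)"

definition is_filt :: "'a set set \<Rightarrow> bool" where
  "is_filt F \<longleftrightarrow> F \<noteq> {} \<and> (\<forall>f\<in>F. f \<noteq> {})
     \<and> (\<forall>f\<in>F. \<forall>g\<in>F. f \<inter> g \<in> F) \<and> (\<forall>f\<in>F. \<forall>g. f \<subseteq> g \<longrightarrow> g \<in> F)"

definition weakly_flat :: "('a \<Rightarrow> 'a \<Rightarrow> ennreal) \<Rightarrow> 'a set set \<Rightarrow> bool" where
  "weakly_flat d F \<longleftrightarrow> (\<forall>\<epsilon>::real. \<epsilon> > 0 \<longrightarrow>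
     (\<exists>f\<in>F. \<forall>x\<in>f. \<forall>g\<in>F. \<exists>y\<in>g. d x y \<le> ennreal \<epsilon>))"

definition flat :: "('a \<Rightarrow> 'a \<Rightarrow> ennreal) \<Rightarrow> 'a set set \<Rightarrow> bool" where
  "flat d F \<longleftrightarrow> (\<forall>\<epsilon>::real. \<epsilon> > 0 \<longrightarrow>
     (\<exists>f\<in>F. \<forall>X. finite X \<and> X \<subseteq> f \<longrightarrow> (\<forall>g\<in>F. \<exists>y\<in>g. \<forall>x\<in>X. d x y \<le> ennreal \<epsilon>)))"

definition conv :: "('a \<Rightarrow> 'a \<Rightarrow> ennreal) \<Rightarrow> 'a set set \<Rightarrow> 'a set set \<Rightarrow> bool" where
  "conv d F1 F2 \<longleftrightarrow> (\<forall>\<epsilon>::real. \<epsilon> > 0 \<longrightarrow>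
     (\<exists>f\<in>F1. \<forall>x\<in>f. \<forall>g\<in>F2. \<exists>y\<in>g. d x y \<le> ennreal \<epsilon>))"

definition wfil :: "('a \<Rightarrow> 'a \<Rightarrow> ennreal) \<Rightarrow> 'a set set \<Rightarrow> bool" where
  "wfil d F \<longleftrightarrow> is_filt F \<and> weakly_flat d F"

definition is_lub :: "('a \<Rightarrow> 'a \<Rightarrow> ennreal) \<Rightarrow> 'a set set set \<Rightarrow> 'a set set \<Rightarrow> bool" where
  "is_lub d S F \<longleftrightarrow> wfil d F \<and> (\<forall>G\<in>S. conv d G F)
     \<and> (\<forall>H. wfil d H \<and> (\<forall>G\<in>S. conv d G H) \<longrightarrow> conv d F H)"

definition seq_filter :: "(nat \<Rightarrow> 'a) \<Rightarrow> 'a set set" where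
  "seq_filter x = {s. \<exists>n. {x p |p. p \<ge> n} \<subseteq> s}"

definition fwd_cauchy :: "('a \<Rightarrow> 'a \<Rightarrow> ennreal) \<Rightarrow> (nat \<Rightarrow> 'a) \<Rightarrow> bool" where
  "fwd_cauchy d x \<longleftrightarrow> (\<forall>\<epsilon>::real. \<epsilon> > 0 \<longrightarrow>
     (\<exists>N. \<forall>n m. N \<le> n \<and> n \<le> m \<longrightarrow> d (x n) (x m) \<le> ennreal \<epsilon>))"

definition directed_fam :: "('a \<Rightarrow> 'a \<Rightarrow> ennreal) \<Rightarrow> 'a set set set \<Rightarrow> bool" where
  "directed_fam d S \<longleftrightarrow> (\<forall>s\<in>S. \<forall>t\<in>S. \<exists>u\<in>S. conv d s u \<and> conv d t u)"

end

theory Submission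
  imports Defs
begin

definition nb :: "('a \<Rightarrow> 'a \<Rightarrow> ennreal) \<Rightarrow> 'a set set \<Rightarrow> real \<Rightarrow> 'a set" where
  "nb d F e = {x. \<forall>g\<in>F. \<exists>y\<in>g. d x y \<le> ennreal e}"

lemma conv_nb: "conv d G H \<longleftrightarrow> (\<forall>e>0. \<exists>g\<in>G. g \<subseteq> nb d H e)"
  unfolding conv_def nb_def subset_iff mem_Collect_eq Ball_def by (rule refl)
lemma wf_nb: "weakly_flat d F \<longleftrightarrow> (\<forall>e>0. \<exists>g\<in>F. g \<subseteq> nb d F e)"
  unfolding weakly_flat_def nb_def subset_iff mem_Collect_eq Ball_def by (rule refl)
lemma nb_mono: "e \<le> e' \<Longrightarrow> nb d F e \<subseteq> nb d F e'"
proof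
  fix x assume "e \<le> e'" "x \<in> nb d F e"
  show "x \<in> nb d F e'" unfolding nb_def
  proof (intro CollectI ballI)
    fix g assume "g \<in> F"
    then obtain y where y: "y \<in> g" "d x y \<le> ennreal e" using \<open>x \<in> nb d F e\<close> unfolding nb_def by blast
    have "d x y \<le> ennreal e'" using y(2) ennreal_leI[OF \<open>e \<le> e'\<close>] by (rule order_trans)
    then show "\<exists>y\<in>g. d x y \<le> ennreal e'" using y(1) by blast
  qed
qed

lemma tri:
  assumes "gms d" "d a b \<le> ennreal e1" "d b c \<le> ennreal e2" "0 \<le> e1" "0 \<le> e2" "e1 + e2 \<le> e"
  shows "d a c \<le> ennreal e"
proof -
  have "d a c \<le> d a b + d b c" using assms(1) unfolding gms_def by blast
  also have "\<dots> \<le> ennreal e1 + ennreal e2" using assms(2,3) by (rule add_mono)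
  also have "\<dots> = ennreal (e1 + e2)" using assms by (simp add: ennreal_plus)
  also have "\<dots> \<le> ennreal e" using assms(6) by (rule ennreal_leI)
  finally show ?thesis .
qed

lemma nb_tri:
  assumes "gms d" "d a b \<le> ennreal e1" "b \<in> nb d H e2" "0 \<le> e1" "0 \<le> e2"
  shows "a \<in> nb d H (e1 + e2)"
  unfolding nb_def
proof (intro CollectI ballI)
  fix g assume "g \<in> H"
  then obtain y where y: "y \<in> g" "d b y \<le> ennreal e2" using assms(3) unfolding nb_def by blast
  have "d a y \<le> ennreal (e1 + e2)" using tri[OF assms(1,2) y(2) assms(4,5) order_refl] .
  then show "\<exists>y\<in>g. d a y \<le> ennreal (e1 + e2)" using y(1) by blast
qed

lemma filt_nb: "is_filt F \<Longrightarrow> g \<in> F \<Longrightarrow> g \<subseteq> S \<Longrightarrow> S \<in> F"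
  unfolding is_filt_def by blast

lemma wfil_nb: "wfil d F \<Longrightarrow> e > 0 \<Longrightarrow> nb d F e \<in> F"
  unfolding wfil_def wf_nb using filt_nb by blast

lemma conv_trans:
  assumes "gms d" "conv d G H" "conv d H K"
  shows "conv d G K"
  unfolding conv_nb
proof (intro allI impI)
  fix e :: real assume e: "e > 0"
  obtain g where g: "g \<in> G" "g \<subseteq> nb d H (e/2)" using assms(2) e unfolding conv_nb by (meson half_gt_zero)
  obtain h where h: "h \<in> H" "h \<subseteq> nb d K (e/2)" using assms(3) e unfolding conv_nb by (meson half_gt_zero)
  have "g \<subseteq> nb d K e"
  proof
    fix x assume "x \<in> g"
    then obtain z where z: "z \<in> h" "d x z \<le> ennreal (e/2)" using g h unfolding nb_def by blast
    then have "z \<in> nb d K (e/2)" using h by blast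
    from nb_tri[OF assms(1) z(2) this] e show "x \<in> nb d K e" by simp
  qed
  then show "\<exists>g\<in>G. g \<subseteq> nb d K e" using g by blast
qed

lemma seq_build:
  assumes "P 0 x0" "\<And>n x. P n x \<Longrightarrow> \<exists>y. P (Suc n) y \<and> R n x y"
  shows "\<exists>z. z 0 = x0 \<and> (\<forall>n. P n (z n) \<and> R n (z n) (z (Suc n)))"
proof -
  define z where "z = rec_nat x0 (\<lambda>n x. SOME y. P (Suc n) y \<and> R n x y)"
  have z0: "z 0 = x0" unfolding z_def by simp
  have zS: "\<And>n. z (Suc n) = (SOME y. P (Suc n) y \<and> R n (z n) y)"
    unfolding z_def by simp
  have st: "P (Suc n) (z (Suc n)) \<and> R n (z n) (z (Suc n))" if "P n (z n)" for n
  proof -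
    have "\<exists>y. P (Suc n) y \<and> R n (z n) y" using assms(2)[OF that] .
    from someI_ex[OF this] show ?thesis unfolding zS[of n] .
  qed
  have P: "P n (z n)" for n
  proof (induction n)
    case 0 then show ?case using assms(1) z0 by simp
  next
    case (Suc n) then show ?case using st by blast
  qed
  show ?thesis using z0 P st by blast
qed

lemma cauchy_geo:
  assumes "gms d" "c \<ge> 0" "\<And>n. d (x n) (x (Suc n)) \<le> ennreal (c * (1/2)^n)"
  shows "d (x n) (x (n + j)) \<le> ennreal (2*c*(1/2)^n - 2*c*(1/2)^(n+j))"
proof (induction j)
  case 0
  have "d (x n) (x n) = 0" using assms(1) unfolding gms_def by blast
  then show ?case by simp
next
  case (Suc j)
  have a: "0 \<le> 2*c*(1/2)^n - 2*c*(1/2)^(n+j)"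
    using assms(2) by (simp add: mult_left_mono power_add power_le_one)
  show ?case
    using tri[OF assms(1) Suc assms(3)[of "n+j"] a] assms(2) by (simp add: algebra_simps)
qed

lemma cauchy_geo2:
  assumes "gms d" "c \<ge> 0" "\<And>n. d (x n) (x (Suc n)) \<le> ennreal (c * (1/2)^n)" "n \<le> m"
  shows "d (x n) (x m) \<le> ennreal (2*c*(1/2)^n)"
proof -
  obtain j where m: "m = n + j" using assms(4) le_Suc_ex by blast
  have "d (x n) (x m) \<le> ennreal (2*c*(1/2)^n - 2*c*(1/2)^(n+j))"
    using cauchy_geo[OF assms(1-3)] m by blast
  also have "\<dots> \<le> ennreal (2*c*(1/2)^n)" using assms(2) by (intro ennreal_leI) simp
  finally show ?thesis .
qed

lemma small_pow: "(\<delta>::real) > 0 \<Longrightarrow> c > 0 \<Longrightarrow> \<exists>N. \<forall>n\<ge>N. c * (1/2)^n \<le> \<delta>"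
proof -
  assume d: "\<delta> > 0" and c: "c > 0"
  obtain N where N: "(1/2::real)^N < \<delta>/c" using real_arch_pow_inv[of "\<delta>/c" "1/2"] d c by auto
  have "c * (1/2)^n \<le> \<delta>" if "n \<ge> N" for n
  proof -
    have "(1/2::real)^n \<le> (1/2)^N" using that by (simp add: power_decreasing)
    then have "(1/2::real)^n \<le> \<delta>/c" using N by linarith
    then show ?thesis using c by (simp add: field_simps)
  qed
  then show ?thesis by blast
qed

lemma cauchy_geo_fc:
  assumes "gms d" "c \<ge> 0" "\<And>n. d (x n) (x (Suc n)) \<le> ennreal (c * (1/2)^n)"
  shows "fwd_cauchy d x"
  unfolding fwd_cauchy_def
proof (intro allI impI)
  fix e :: real assume e: "e > 0"
  obtain N where N: "\<forall>n\<ge>N. (2*c+1) * (1/2)^n \<le> e" using small_pow[OF e, of "2*c+1"] assms(2) by auto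
  show "\<exists>N. \<forall>n m. N \<le> n \<and> n \<le> m \<longrightarrow> d (x n) (x m) \<le> ennreal e"
  proof (intro exI allI impI)
    fix n m assume nm: "N \<le> n \<and> n \<le> m"
    have "d (x n) (x m) \<le> ennreal (2*c*(1/2)^n)" using cauchy_geo2[OF assms] nm by blast
    also have "\<dots> \<le> ennreal e"
    proof (rule ennreal_leI)
      have "2*c*(1/2::real)^n \<le> (2*c+1)*(1/2)^n" by (intro mult_right_mono) auto
      also have "\<dots> \<le> e" using N nm by blast
      finally show "2*c*(1/2::real)^n \<le> e" .
    qed
    finally show "d (x n) (x m) \<le> ennreal e" .
  qed
qed


definition inter_f :: "'a set set set \<Rightarrow> 'a set set" where
  "inter_f S = {f. \<forall>G\<in>S. f \<in> G}"

lemma nb_anti: "F \<subseteq> F' \<Longrightarrow> nb d F' e \<subseteq> nb d F e"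
  unfolding nb_def by auto

lemma conv_filt: "is_filt G \<Longrightarrow> conv d G H \<Longrightarrow> e > 0 \<Longrightarrow> nb d H e \<in> G"
  unfolding conv_nb using filt_nb by blast

lemma lub_inter:
  assumes S: "S \<noteq> {}" "\<forall>G\<in>S. wfil d G"
  shows "is_lub d S (inter_f S)"
proof -
  let ?I = "inter_f S"
  have filt: "is_filt G" if "G \<in> S" for G using S that unfolding wfil_def by blast
  have "UNIV \<in> G" if GS: "G \<in> S" for G
  proof -
    obtain f where "f \<in> G" using filt[OF GS] unfolding is_filt_def by blast
    then show ?thesis using filt_nb[OF filt[OF GS]] by blast
  qed
  then have i1: "?I \<noteq> {}" unfolding inter_f_def by blast
  obtain G0 where G0: "G0 \<in> S" using S by blast
  have i2: "\<forall>f\<in>?I. f \<noteq> {}" using filt[OF G0] G0 unfolding inter_f_def is_filt_def by blast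
  have i3: "\<forall>f\<in>?I. \<forall>g\<in>?I. f \<inter> g \<in> ?I"
  proof (intro ballI)
    fix f g assume fg: "f \<in> ?I" "g \<in> ?I"
    show "f \<inter> g \<in> ?I" unfolding inter_f_def
    proof (intro CollectI ballI)
      fix G assume GS: "G \<in> S"
      then have "f \<in> G" "g \<in> G" using fg unfolding inter_f_def by auto
      then show "f \<inter> g \<in> G" using filt[OF GS] unfolding is_filt_def by blast
    qed
  qed
  have i4: "\<forall>f\<in>?I. \<forall>g. f \<subseteq> g \<longrightarrow> g \<in> ?I"
  proof (intro ballI allI impI)
    fix f g assume fg: "f \<in> ?I" "f \<subseteq> g"
    show "g \<in> ?I" unfolding inter_f_def
    proof (intro CollectI ballI)
      fix G assume GS: "G \<in> S"
      then have "f \<in> G" using fg unfolding inter_f_def by auto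
      then show "g \<in> G" using filt_nb[OF filt[OF GS]] fg(2) by blast
    qed
  qed
  have fI: "is_filt ?I" unfolding is_filt_def using i1 i2 i3 i4 by blast
  have sub: "?I \<subseteq> G" if "G \<in> S" for G using that unfolding inter_f_def by blast
  have nbI: "nb d ?I e \<in> ?I" if "e > 0" for e
  proof -
    have "nb d ?I e \<in> G" if "G \<in> S" for G
    proof -
      have "nb d G e \<in> G" using wfil_nb S(2) that \<open>e > 0\<close> by blast
      moreover have "nb d G e \<subseteq> nb d ?I e" using nb_anti[OF sub[OF that]] .
      ultimately show ?thesis using filt_nb[OF filt[OF that]] by blast
    qed
    then show ?thesis unfolding inter_f_def by blast
  qed
  have wI: "wfil d ?I" unfolding wfil_def wf_nb using fI nbI by blast
  have up: "conv d G ?I" if "G \<in> S" for G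
    unfolding conv_nb
  proof (intro allI impI)
    fix e :: real assume "e > 0"
    have "nb d G e \<in> G" using wfil_nb S(2) that \<open>e > 0\<close> by blast
    moreover have "nb d G e \<subseteq> nb d ?I e" using nb_anti[OF sub[OF that]] .
    ultimately show "\<exists>g\<in>G. g \<subseteq> nb d ?I e" by blast
  qed
  have least: "conv d ?I H" if "\<forall>G\<in>S. conv d G H" for H
    unfolding conv_nb
  proof (intro allI impI)
    fix e :: real assume "e > 0"
    have "nb d H e \<in> ?I" unfolding inter_f_def using conv_filt[OF filt _ \<open>e > 0\<close>] that by blast
    then show "\<exists>g\<in>?I. g \<subseteq> nb d H e" by blast
  qed
  show ?thesis unfolding is_lub_def using wI up least by blast
qed

lemma seq_in: "{x p |p. p \<ge> n} \<in> seq_filter x"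
  unfolding seq_filter_def by blast

lemma seq_mem: "g \<in> seq_filter x \<Longrightarrow> \<exists>n. \<forall>p\<ge>n. x p \<in> g"
  unfolding seq_filter_def by blast

lemma seq_filt: "is_filt (seq_filter x)"
proof -
  have a: "seq_filter x \<noteq> {}" using seq_in by blast
  have b: "\<forall>f\<in>seq_filter x. f \<noteq> {}" using seq_mem by blast
  have c: "\<forall>f\<in>seq_filter x. \<forall>g\<in>seq_filter x. f \<inter> g \<in> seq_filter x"
  proof (intro ballI)
    fix f g assume "f \<in> seq_filter x" "g \<in> seq_filter x"
    then obtain n m where "\<forall>p\<ge>n. x p \<in> f" "\<forall>p\<ge>m. x p \<in> g" using seq_mem by metis
    then have "{x p |p. p \<ge> max n m} \<subseteq> f \<inter> g" by auto
    then show "f \<inter> g \<in> seq_filter x" unfolding seq_filter_def by blast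
  qed
  have e: "\<forall>f\<in>seq_filter x. \<forall>g. f \<subseteq> g \<longrightarrow> g \<in> seq_filter x"
    unfolding seq_filter_def by blast
  show ?thesis unfolding is_filt_def using a b c e by blast
qed

lemma seq_wf:
  assumes "fwd_cauchy d x"
  shows "wfil d (seq_filter x)"
proof -
  have "\<exists>g\<in>seq_filter x. g \<subseteq> nb d (seq_filter x) e" if ep: "e > 0" for e
  proof -
    obtain N where N: "\<forall>n m. N \<le> n \<and> n \<le> m \<longrightarrow> d (x n) (x m) \<le> ennreal e"
      using assms ep unfolding fwd_cauchy_def by blast
    have "{x p |p. p \<ge> N} \<subseteq> nb d (seq_filter x) e"
    proof
      fix w assume "w \<in> {x p |p. p \<ge> N}"
      then obtain p where p: "w = x p" "p \<ge> N" by blast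
      show "w \<in> nb d (seq_filter x) e" unfolding nb_def
      proof (intro CollectI ballI)
        fix g assume "g \<in> seq_filter x"
        then obtain n where n: "\<forall>q\<ge>n. x q \<in> g" using seq_mem by blast
        have "x (max p n) \<in> g" using n by simp
        moreover have "d w (x (max p n)) \<le> ennreal e" using N p by simp
        ultimately show "\<exists>y\<in>g. d w y \<le> ennreal e" by blast
      qed
    qed
    then show ?thesis using seq_in by blast
  qed
  then show ?thesis unfolding wfil_def wf_nb using seq_filt by blast
qed

lemma conv_to_F:
  assumes "\<And>n. x n \<in> nb d F (c*(1/2)^n)" "c > 0"
  shows "conv d (seq_filter x) F"
  unfolding conv_nb
proof (intro allI impI)
  fix e :: real assume "e > 0"
  obtain N where N: "\<forall>n\<ge>N. c*(1/2)^n \<le> e" using small_pow[OF \<open>e > 0\<close> assms(2)] by blast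
  have "{x p |p. p \<ge> N} \<subseteq> nb d F e"
  proof
    fix w assume "w \<in> {x p |p. p \<ge> N}"
    then obtain p where p: "w = x p" "p \<ge> N" by blast
    have "nb d F (c*(1/2)^p) \<subseteq> nb d F e" using N p by (intro nb_mono) blast
    then show "w \<in> nb d F e" using assms(1) p by blast
  qed
  then show "\<exists>g\<in>seq_filter x. g \<subseteq> nb d F e" using seq_in by blast
qed

lemma wf_seq:
  assumes gms: "gms d" and F: "wfil d F" and c: "c > 0" and x0: "x0 \<in> nb d F c"
  shows "\<exists>z. z 0 = x0 \<and> fwd_cauchy d z \<and> conv d (seq_filter z) F \<and> (\<forall>n. d (z 0) (z n) \<le> ennreal (2*c))"
proof -
  let ?P = "\<lambda>n x. x \<in> nb d F (c*(1/2)^n)"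
  let ?R = "\<lambda>n x y. d x y \<le> ennreal (c*(1/2)^n)"
  have P0: "?P 0 x0" using x0 by simp
  have step: "\<exists>y. ?P (Suc n) y \<and> ?R n x y" if Pn: "?P n x" for n x
  proof -
    have "nb d F (c*(1/2)^Suc n) \<in> F" using wfil_nb[OF F] c by simp
    then obtain y where "y \<in> nb d F (c*(1/2)^Suc n)" "d x y \<le> ennreal (c*(1/2)^n)"
      using Pn unfolding nb_def by blast
    then show ?thesis by blast
  qed
  obtain z where z: "z 0 = x0" "\<And>n. ?P n (z n)" "\<And>n. ?R n (z n) (z (Suc n))"
    using seq_build[of ?P x0 ?R, OF P0 step] by blast
  have fc: "fwd_cauchy d z" using cauchy_geo_fc[OF gms _ z(3)] c by simp
  have cv: "conv d (seq_filter z) F" using conv_to_F[OF z(2) c] .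
  have "d (z 0) (z n) \<le> ennreal (2*c)" for n using cauchy_geo2[OF gms _ z(3), of 0 n] c by simp
  then show ?thesis using z(1) fc cv by blast
qed


lemma part_b:
  assumes gms: "gms d" and F: "wfil d F"
  shows "is_lub d {seq_filter x |x. fwd_cauchy d x \<and> conv d (seq_filter x) F} F"
proof -
  let ?S = "{seq_filter x |x. fwd_cauchy d x \<and> conv d (seq_filter x) F}"
  have up: "\<forall>G\<in>?S. conv d G F" by blast
  have least: "conv d F H" if H: "\<forall>G\<in>?S. conv d G H" for H
  proof (rule ccontr)
    assume "\<not> conv d F H"
    then obtain \<epsilon> :: real where ep: "\<epsilon> > 0" and nf: "\<forall>f\<in>F. \<not> f \<subseteq> nb d H \<epsilon>"
      unfolding conv_nb by blast
    have "nb d F (\<epsilon>/4) \<in> F" using wfil_nb[OF F] ep by simp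
    then obtain x0 where x0: "x0 \<in> nb d F (\<epsilon>/4)" "x0 \<notin> nb d H \<epsilon>" using nf by blast
    obtain z where z: "z 0 = x0" "fwd_cauchy d z" "conv d (seq_filter z) F"
      "\<forall>n. d (z 0) (z n) \<le> ennreal (2*(\<epsilon>/4))"
      using wf_seq[OF gms F _ x0(1)] ep by auto
    have "seq_filter z \<in> ?S" using z by blast
    then have "conv d (seq_filter z) H" using H by blast
    then obtain g where g: "g \<in> seq_filter z" "g \<subseteq> nb d H (\<epsilon>/2)"
      unfolding conv_nb using ep by (meson half_gt_zero)
    obtain n where "\<forall>p\<ge>n. z p \<in> g" using seq_mem[OF g(1)] by blast
    then have zn: "z n \<in> nb d H (\<epsilon>/2)" using g(2) by blast
    have dz: "d x0 (z n) \<le> ennreal (\<epsilon>/2)" using z(1) z(4) by simp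
    have "x0 \<in> nb d H (\<epsilon>/2 + \<epsilon>/2)" using nb_tri[OF gms dz zn] ep by simp
    then show False using x0(2) by simp
  qed
  show ?thesis unfolding is_lub_def using F up least by blast
qed


lemma flat_wf: "flat d F \<Longrightarrow> weakly_flat d F"
  unfolding flat_def weakly_flat_def
proof (intro allI impI)
  fix e :: real assume A: "\<forall>e>0. \<exists>f\<in>F. \<forall>X. finite X \<and> X \<subseteq> f \<longrightarrow> (\<forall>g\<in>F. \<exists>y\<in>g. \<forall>x\<in>X. d x y \<le> ennreal e)"
    and e: "e > 0"
  then obtain f where f: "f \<in> F" "\<forall>X. finite X \<and> X \<subseteq> f \<longrightarrow> (\<forall>g\<in>F. \<exists>y\<in>g. \<forall>x\<in>X. d x y \<le> ennreal e)"
    by blast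
  have "\<forall>x\<in>f. \<forall>g\<in>F. \<exists>y\<in>g. d x y \<le> ennreal e"
  proof (intro ballI)
    fix x g assume "x \<in> f" "g \<in> F"
    then have "\<exists>y\<in>g. \<forall>x'\<in>{x}. d x' y \<le> ennreal e" using f(2) by blast
    then show "\<exists>y\<in>g. d x y \<le> ennreal e" by simp
  qed
  then show "\<exists>f\<in>F. \<forall>x\<in>f. \<forall>g\<in>F. \<exists>y\<in>g. d x y \<le> ennreal e" using f(1) by blast
qed

lemma follow:
  assumes gms: "gms d" and fc: "fwd_cauchy d x"
    and k: "\<And>n. kx n \<ge> n" "\<And>n. d (x (kx n)) (wx n) \<le> ennreal ((1/2)^n)"
    "\<And>n. d (wx n) (z (Suc n)) \<le> ennreal ((1/2)^n)"
  shows "conv d (seq_filter x) (seq_filter z)"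
  unfolding conv_nb
proof (intro allI impI)
  fix e :: real assume e: "e > 0"
  obtain N where N: "\<forall>n m. N \<le> n \<and> n \<le> m \<longrightarrow> d (x n) (x m) \<le> ennreal (e/2)"
    using fc e unfolding fwd_cauchy_def by (meson half_gt_zero)
  obtain n0 where n0: "\<forall>n\<ge>n0. 1*(1/2)^n \<le> e/4" using small_pow[of "e/4" 1] e by auto
  have "{x p |p. p \<ge> N} \<subseteq> nb d (seq_filter z) e"
  proof
    fix w assume "w \<in> {x p |p. p \<ge> N}"
    then obtain p where p: "w = x p" "p \<ge> N" by blast
    show "w \<in> nb d (seq_filter z) e" unfolding nb_def
    proof (intro CollectI ballI)
      fix h assume "h \<in> seq_filter z"
      then obtain M where M: "\<forall>q\<ge>M. z q \<in> h" using seq_mem by blast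
      define n where "n = max (max p n0) M"
      have zh: "z (Suc n) \<in> h" using M n_def by simp
      have sm: "(1/2::real)^n \<le> e/4" using n0 n_def by simp
      have d1: "d (x p) (x (kx n)) \<le> ennreal (e/2)" using N p k(1)[of n] n_def by simp
      have d2: "d (x (kx n)) (z (Suc n)) \<le> ennreal (e/2)"
        using tri[OF gms k(2)[of n] k(3)[of n]] sm by simp
      have "d w (z (Suc n)) \<le> ennreal e" using tri[OF gms d1 d2] e p(1) by simp
      then show "\<exists>y\<in>h. d w y \<le> ennreal e" using zh by blast
    qed
  qed
  then show "\<exists>g\<in>seq_filter x. g \<subseteq> nb d (seq_filter z) e" using seq_in by blast
qed

lemma target:
  assumes F: "is_filt F" and cv: "conv d (seq_filter x) F" and ff: "\<And>n. ff n \<in> F"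
  shows "\<exists>k w. k \<ge> n \<and> w \<in> ff n \<and> d (x k) w \<le> ennreal ((1/2)^n)"
proof -
  obtain g where g: "g \<in> seq_filter x" "g \<subseteq> nb d F ((1/2)^n)" using cv unfolding conv_nb by force
  obtain N where N: "\<forall>p\<ge>N. x p \<in> g" using seq_mem[OF g(1)] by blast
  have "x (max n N) \<in> nb d F ((1/2)^n)" using N g(2) by auto
  then obtain w where "w \<in> ff n" "d (x (max n N)) w \<le> ennreal ((1/2)^n)" using ff unfolding nb_def by blast
  then show ?thesis by (intro exI[of _ "max n N"] exI[of _ w]) simp
qed

lemma flat_directed:
  assumes gms: "gms d" and F: "is_filt F" and fl: "flat d F"
    and x: "fwd_cauchy d x" "conv d (seq_filter x) F"
    and y: "fwd_cauchy d y" "conv d (seq_filter y) F"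
  shows "\<exists>z. fwd_cauchy d z \<and> conv d (seq_filter z) F \<and> conv d (seq_filter x) (seq_filter z)
            \<and> conv d (seq_filter y) (seq_filter z)"
proof -
  have "\<forall>n. \<exists>f. f \<in> F \<and> (\<forall>X. finite X \<and> X \<subseteq> f \<longrightarrow> (\<forall>g\<in>F. \<exists>y\<in>g. \<forall>x\<in>X. d x y \<le> ennreal ((1/2)^n)))"
  proof
    fix n
    have A: "\<forall>\<epsilon>::real. \<epsilon> > 0 \<longrightarrow> (\<exists>f\<in>F. \<forall>X. finite X \<and> X \<subseteq> f \<longrightarrow> (\<forall>g\<in>F. \<exists>y\<in>g. \<forall>x\<in>X. d x y \<le> ennreal \<epsilon>))"
      using fl unfolding flat_def .
    have p: "(0::real) < (1/2)^n" by simp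
    from A[rule_format, OF p] show "\<exists>f. f \<in> F \<and> (\<forall>X. finite X \<and> X \<subseteq> f \<longrightarrow> (\<forall>g\<in>F. \<exists>y\<in>g. \<forall>x\<in>X. d x y \<le> ennreal ((1/2)^n)))"
      by blast
  qed
  then obtain ff where ff: "\<And>n. ff n \<in> F"
    "\<And>n X g. finite X \<Longrightarrow> X \<subseteq> ff n \<Longrightarrow> g \<in> F \<Longrightarrow> \<exists>y\<in>g. \<forall>x\<in>X. d x y \<le> ennreal ((1/2)^n)"
    by metis
  have ffnb: "ff n \<subseteq> nb d F (1*(1/2)^n)" for n
  proof
    fix w assume w: "w \<in> ff n"
    show "w \<in> nb d F (1*(1/2)^n)" unfolding nb_def
    proof (intro CollectI ballI)
      fix g assume "g \<in> F"
      then have "\<exists>y\<in>g. \<forall>x\<in>{w}. d x y \<le> ennreal ((1/2)^n)" using ff(2)[of "{w}" n g] w by blast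
      then show "\<exists>y\<in>g. d w y \<le> ennreal (1*(1/2)^n)" by simp
    qed
  qed
  have "\<forall>n. \<exists>k w. k \<ge> n \<and> w \<in> ff n \<and> d (x k) w \<le> ennreal ((1/2)^n)"
    by (intro allI target[OF F x(2)] ff(1))
  then obtain kx wx where kx: "\<And>n. kx n \<ge> n" "\<And>n. wx n \<in> ff n" "\<And>n. d (x (kx n)) (wx n) \<le> ennreal ((1/2)^n)"
    by metis
  have "\<forall>n. \<exists>k w. k \<ge> n \<and> w \<in> ff n \<and> d (y k) w \<le> ennreal ((1/2)^n)"
    by (intro allI target[OF F y(2)] ff(1))
  then obtain ky wy where ky: "\<And>n. ky n \<ge> n" "\<And>n. wy n \<in> ff n" "\<And>n. d (y (ky n)) (wy n) \<le> ennreal ((1/2)^n)"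
    by metis
  obtain z0 where z0: "z0 \<in> ff 0" using ff(1)[of 0] F unfolding is_filt_def by blast
  let ?P = "\<lambda>n z. z \<in> ff n"
  let ?R = "\<lambda>n z z'. d z z' \<le> ennreal ((1/2)^n) \<and> d (wx n) z' \<le> ennreal ((1/2)^n) \<and> d (wy n) z' \<le> ennreal ((1/2)^n)"
  have step: "\<exists>z'. ?P (Suc n) z' \<and> ?R n z z'" if Pn: "?P n z" for n z
  proof -
    have "finite {z, wx n, wy n}" "{z, wx n, wy n} \<subseteq> ff n" using Pn kx(2) ky(2) by auto
    from ff(2)[OF this ff(1)[of "Suc n"]] obtain z' where
      "z' \<in> ff (Suc n)" "\<forall>x\<in>{z, wx n, wy n}. d x z' \<le> ennreal ((1/2)^n)" by blast
    then show ?thesis by auto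
  qed
  obtain z where z: "\<And>n. ?P n (z n)" "\<And>n. ?R n (z n) (z (Suc n))"
    using seq_build[of ?P z0 ?R, OF z0 step] by blast
  have zz: "d (z n) (z (Suc n)) \<le> ennreal (1*(1/2)^n)" for n using z(2)[of n] by simp
  have fc: "fwd_cauchy d z" by (rule cauchy_geo_fc[OF gms _ zz]) simp
  have zz2: "d (wx n) (z (Suc n)) \<le> ennreal ((1/2)^n)" "d (wy n) (z (Suc n)) \<le> ennreal ((1/2)^n)" for n
    using z(2)[of n] by simp_all
  have zi: "z n \<in> nb d F (1*(1/2)^n)" for n using z(1)[of n] ffnb[of n] by (rule subsetD[rotated])
  have cv: "conv d (seq_filter z) F" by (rule conv_to_F[of z d F 1, OF zi]) simp
  have c1: "conv d (seq_filter x) (seq_filter z)" by (rule follow[OF gms x(1) kx(1) kx(3) zz2(1)])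
  have c2: "conv d (seq_filter y) (seq_filter z)" by (rule follow[OF gms y(1) ky(1) ky(3) zz2(2)])
  show ?thesis using fc cv c1 c2 by blast
qed


lemma directed_finite:
  assumes gms: "gms d" and dir: "directed_fam d S" and ne: "S \<noteq> {}"
  shows "finite T \<Longrightarrow> T \<subseteq> S \<Longrightarrow> \<exists>u\<in>S. \<forall>t\<in>T. conv d t u"
proof (induction T rule: finite_induct)
  case empty then show ?case using ne by blast
next
  case (insert t T)
  then obtain u where u: "u \<in> S" "\<forall>t'\<in>T. conv d t' u" by blast
  have "t \<in> S" using insert by blast
  then obtain w where w: "w \<in> S" "conv d t w" "conv d u w" using dir u(1) unfolding directed_fam_def by blast
  have "\<forall>t'\<in>insert t T. conv d t' w"
  proof
    fix t' assume "t' \<in> insert t T"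
    then show "conv d t' w"
    proof
      assume "t' = t" then show ?thesis using w by simp
    next
      assume "t' \<in> T" then show ?thesis using conv_trans[OF gms _ w(3)] u(2) by blast
    qed
  qed
  then show ?case using w(1) by blast
qed

lemma finite_max:
  "finite X \<Longrightarrow> (\<forall>w\<in>X. \<exists>M::nat. \<forall>m\<ge>M. Q w m) \<Longrightarrow> \<exists>M. \<forall>w\<in>X. \<forall>m\<ge>M. Q w m"
proof (induction X rule: finite_induct)
  case empty then show ?case by blast
next
  case (insert a X)
  then obtain M where M: "\<forall>w\<in>X. \<forall>m\<ge>M. Q w m" by blast
  obtain Ma where Ma: "\<forall>m\<ge>Ma. Q a m" using insert by blast
  have "\<forall>w\<in>insert a X. \<forall>m\<ge>max M Ma. Q w m" using M Ma by auto
  then show ?case by blast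
qed

lemma close_lemma:
  assumes gms: "gms d" and cv: "conv d (seq_filter x) (seq_filter v)" and fc: "fwd_cauchy d v"
    and p: "\<forall>m\<ge>p. d (x p) (x m) \<le> ennreal c" and c: "c > 0"
  shows "\<exists>M. \<forall>m\<ge>M. d (x p) (v m) \<le> ennreal (3*c)"
proof -
  obtain g where g: "g \<in> seq_filter x" "g \<subseteq> nb d (seq_filter v) c" using cv c unfolding conv_nb by blast
  obtain N where N: "\<forall>q\<ge>N. x q \<in> g" using seq_mem[OF g(1)] by blast
  have xp': "x (max p N) \<in> nb d (seq_filter v) c" using N g(2) by auto
  obtain Nv where Nv: "\<forall>n m. Nv \<le> n \<and> n \<le> m \<longrightarrow> d (v n) (v m) \<le> ennreal c"
    using fc c unfolding fwd_cauchy_def by blast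
  obtain y where y: "y \<in> {v q |q. q \<ge> Nv}" "d (x (max p N)) y \<le> ennreal c"
    using xp' seq_in[of v Nv] unfolding nb_def by blast
  then obtain m0 where m0: "y = v m0" "m0 \<ge> Nv" by blast
  have d1: "d (x p) (x (max p N)) \<le> ennreal c" using p by simp
  have d2: "d (x p) (v m0) \<le> ennreal (2*c)" using tri[OF gms d1 y(2)] m0(1) c by simp
  have "d (x p) (v m) \<le> ennreal (3*c)" if "m \<ge> m0" for m
  proof -
    have "d (v m0) (v m) \<le> ennreal c" using Nv m0(2) that by blast
    then show ?thesis using tri[OF gms d2] c by simp
  qed
  then show ?thesis by blast
qed

lemma inter_flat:
  assumes gms: "gms d" and ne: "S \<noteq> {}" and Sc: "S \<subseteq> {seq_filter x |x. fwd_cauchy d x}"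
    and dir: "directed_fam d S"
  shows "flat d (inter_f S)"
  unfolding flat_def
proof (intro allI impI)
  fix \<epsilon> :: real assume ep: "\<epsilon> > 0"
  define c where "c = \<epsilon>/3"
  have c: "c > 0" using ep c_def by simp
  define f where "f = {x p | x p. seq_filter x \<in> S \<and> fwd_cauchy d x \<and> (\<forall>m\<ge>p. d (x p) (x m) \<le> ennreal c)}"
  have fI: "f \<in> inter_f S" unfolding inter_f_def
  proof (intro CollectI ballI)
    fix G assume G: "G \<in> S"
    then obtain x where x: "G = seq_filter x" "fwd_cauchy d x" using Sc by blast
    obtain N where N: "\<forall>n m. N \<le> n \<and> n \<le> m \<longrightarrow> d (x n) (x m) \<le> ennreal c"
      using x(2) c unfolding fwd_cauchy_def by blast
    have "{x p |p. p \<ge> N} \<subseteq> f"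
    proof
      fix w assume "w \<in> {x p |p. p \<ge> N}"
      then obtain p where p: "w = x p" "p \<ge> N" by blast
      have "\<forall>m\<ge>p. d (x p) (x m) \<le> ennreal c" using N p(2) by auto
      then show "w \<in> f" unfolding f_def using p(1) G x by blast
    qed
    then show "f \<in> G" using x(1) unfolding seq_filter_def by blast
  qed
  have "\<forall>X. finite X \<and> X \<subseteq> f \<longrightarrow> (\<forall>g\<in>inter_f S. \<exists>y\<in>g. \<forall>x\<in>X. d x y \<le> ennreal \<epsilon>)"
  proof (intro allI impI ballI)
    fix X g assume X: "finite X \<and> X \<subseteq> f" and g: "g \<in> inter_f S"
    have "\<forall>w\<in>X. \<exists>x p. w = x p \<and> seq_filter x \<in> S \<and> fwd_cauchy d x \<and> (\<forall>m\<ge>p. d (x p) (x m) \<le> ennreal c)"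
      using X unfolding f_def by blast
    then obtain sx px where sx: "\<And>w. w \<in> X \<Longrightarrow> w = sx w (px w) \<and> seq_filter (sx w) \<in> S \<and> fwd_cauchy d (sx w)
        \<and> (\<forall>m\<ge>px w. d (sx w (px w)) (sx w m) \<le> ennreal c)"
      by metis
    have "finite ((\<lambda>w. seq_filter (sx w)) ` X)" "(\<lambda>w. seq_filter (sx w)) ` X \<subseteq> S" using X sx by auto
    from directed_finite[OF gms dir ne this] obtain u where
      u: "u \<in> S" "\<forall>t\<in>(\<lambda>w. seq_filter (sx w)) ` X. conv d t u" by blast
    obtain v where v: "u = seq_filter v" "fwd_cauchy d v" using u(1) Sc by blast
    have "\<forall>w\<in>X. \<exists>M. \<forall>m\<ge>M. d w (v m) \<le> ennreal (3*c)"
    proof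
      fix w assume w: "w \<in> X"
      have cv: "conv d (seq_filter (sx w)) (seq_filter v)" using u(2) w v(1) by blast
      from close_lemma[OF gms cv v(2) _ c] sx[OF w]
      show "\<exists>M. \<forall>m\<ge>M. d w (v m) \<le> ennreal (3*c)" by metis
    qed
    from finite_max[OF _ this] X obtain M where M: "\<forall>w\<in>X. \<forall>m\<ge>M. d w (v m) \<le> ennreal (3*c)" by blast
    have "g \<in> seq_filter v" using g u(1) v(1) unfolding inter_f_def by blast
    then obtain n where n: "\<forall>q\<ge>n. v q \<in> g" using seq_mem by blast
    have "v (max M n) \<in> g" using n by simp
    moreover have "\<forall>w\<in>X. d w (v (max M n)) \<le> ennreal \<epsilon>" using M c_def by simp
    ultimately show "\<exists>y\<in>g. \<forall>x\<in>X. d x y \<le> ennreal \<epsilon>" by blast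
  qed
  then show "\<exists>f\<in>inter_f S. \<forall>X. finite X \<and> X \<subseteq> f \<longrightarrow> (\<forall>g\<in>inter_f S. \<exists>y\<in>g. \<forall>x\<in>X. d x y \<le> ennreal \<epsilon>)"
    using fI by blast
qed


theorem mainTheorem12:
  fixes d :: "'a \<Rightarrow> 'a \<Rightarrow> ennreal"
  assumes "gms d"
  shows
    "(\<forall>S. S \<noteq> {} \<and> (\<forall>G\<in>S. wfil d G) \<longrightarrow> (\<exists>F. is_lub d S F))
   \<and> (\<forall>F. wfil d F \<longrightarrow>
        is_lub d {seq_filter x |x. fwd_cauchy d x \<and> conv d (seq_filter x) F} F)
   \<and> (\<forall>F. is_filt F \<and> flat d F \<longrightarrow>
        (\<exists>S. S \<noteq> {} \<and> S \<subseteq> {seq_filter x |x. fwd_cauchy d x} \<and> directed_fam d S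
             \<and> is_lub d S F))
   \<and> (\<forall>S G. S \<noteq> {} \<and> S \<subseteq> {seq_filter x |x. fwd_cauchy d x} \<and> directed_fam d S
             \<and> is_lub d S G \<longrightarrow>
        (\<exists>F. is_filt F \<and> flat d F \<and> conv d F G \<and> conv d G F))"
proof (intro conjI allI impI)
  fix S :: "'a set set set" assume "S \<noteq> {} \<and> (\<forall>G\<in>S. wfil d G)"
  then show "\<exists>F. is_lub d S F" using lub_inter by blast
next
  fix F assume "wfil d F"
  then show "is_lub d {seq_filter x |x. fwd_cauchy d x \<and> conv d (seq_filter x) F} F"
    using part_b[OF assms] by blast
next
  fix F assume A: "is_filt F \<and> flat d F"
  let ?S = "{seq_filter x |x. fwd_cauchy d x \<and> conv d (seq_filter x) F}"
  have wF: "wfil d F" using A flat_wf unfolding wfil_def by blast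
  have "nb d F 1 \<in> F" using wfil_nb[OF wF] by simp
  then obtain x0 where x0: "x0 \<in> nb d F 1" using A unfolding is_filt_def by blast
  obtain z where z: "fwd_cauchy d z" "conv d (seq_filter z) F" using wf_seq[OF assms wF _ x0] by auto
  have ne: "?S \<noteq> {}" using z by blast
  have sub: "?S \<subseteq> {seq_filter x |x. fwd_cauchy d x}" by blast
  have dir: "directed_fam d ?S" unfolding directed_fam_def
  proof (intro ballI)
    fix s t assume s: "s \<in> ?S" and t: "t \<in> ?S"
    obtain x where x: "s = seq_filter x" "fwd_cauchy d x" "conv d (seq_filter x) F" using s by blast
    obtain y where y: "t = seq_filter y" "fwd_cauchy d y" "conv d (seq_filter y) F" using t by blast
    obtain w where w: "fwd_cauchy d w" "conv d (seq_filter w) F" "conv d (seq_filter x) (seq_filter w)"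
      "conv d (seq_filter y) (seq_filter w)"
      using flat_directed[OF assms _ _ x(2,3) y(2,3)] A by blast
    have "seq_filter w \<in> ?S" using w by blast
    then show "\<exists>u\<in>?S. conv d s u \<and> conv d t u" using w x(1) y(1) by blast
  qed
  show "\<exists>S. S \<noteq> {} \<and> S \<subseteq> {seq_filter x |x. fwd_cauchy d x} \<and> directed_fam d S \<and> is_lub d S F"
    using ne sub dir part_b[OF assms wF] by (intro exI[of _ ?S] conjI)
next
  fix S G assume A: "S \<noteq> {} \<and> S \<subseteq> {seq_filter x |x. fwd_cauchy d x} \<and> directed_fam d S \<and> is_lub d S G"
  have wS: "\<forall>G'\<in>S. wfil d G'" using A seq_wf by blast
  have L: "is_lub d S (inter_f S)" using lub_inter A wS by blast
  have fl: "flat d (inter_f S)" using inter_flat[OF assms] A by blast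
  have fi: "is_filt (inter_f S)" using L unfolding is_lub_def wfil_def by blast
  have GL: "is_lub d S G" using A by blast
  have c1: "conv d (inter_f S) G" using L GL unfolding is_lub_def by blast
  have c2: "conv d G (inter_f S)" using L GL unfolding is_lub_def by blast
  show "\<exists>F. is_filt F \<and> flat d F \<and> conv d F G \<and> conv d G F" using fi fl c1 c2 by blast
qed

end
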